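(* Any non-abelian Lie superalgebra does not possess simultaneously a quadratic structure and an odd-quadratic structure.
   Context: All vector spaces are finite dimensional over an algebraically closed field $\mathbb{K}$ of characteristic zero. A Lie superalgebra is $\mathfrak{g}=\mathfrak{g}_{\bar{0}}\oplus\mathfrak{g}_{\bar{1}}$. A quadratic (resp. odd-quadratic) structure on $\mathfrak{g}$ is a non-degenerate, supersymmetric, invariant bilinear form on $\mathfrak{g}$ which is even, i.e. $B(\mathfrak{g}_{\bar{0}},\mathfrak{g}_{\bar{1}})=\{0\}$ (resp. odd, i.e. $B(\mathfrak{g}_{\bar{0}},\mathfrak{g}_{\bar{0}})=B(\mathfrak{g}_{\bar{1}},\mathfrak{g}_{\bar{1}})=\{0\}$). *)

theory Defs
  imports Main "HOL-Computational_Algebra.Polynomial"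
begin

text \<open>The ground field is algebraically closed (characteristic zero is imposed via
the type class field_char_0 on the scalar type).\<close>
definition alg_closed_field :: "'k::field itself \<Rightarrow> bool" where
  "alg_closed_field TYPE('k) \<longleftrightarrow>
     (\<forall>p :: 'k poly. 0 < degree p \<longrightarrow> (\<exists>x. poly p x = 0))"

definition fin_dim_vs :: "('k::field \<Rightarrow> 'v::ab_group_add \<Rightarrow> 'v) \<Rightarrow> bool" where
  "fin_dim_vs s \<longleftrightarrow> vector_space s \<and> (\<exists>S. finite S \<and> module.span s S = UNIV)"

text \<open>Z/2-grading: V False is the even part g_0, V True is the odd part g_1;
g = g_0 (+) g_1 as a direct sum of subspaces.\<close>
definition z2_graded :: "('k::field \<Rightarrow> 'v::ab_group_add \<Rightarrow> 'v) \<Rightarrow> (bool \<Rightarrow> 'v set) \<Rightarrow> bool" where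
  "z2_graded s V \<longleftrightarrow> module.subspace s (V False) \<and> module.subspace s (V True)
     \<and> (\<forall>v. \<exists>!ab. fst ab \<in> V False \<and> snd ab \<in> V True \<and> v = fst ab + snd ab)"

text \<open>Sign (-1)^(|x||y|) for parities p, q (True = odd).\<close>
definition psign :: "bool \<Rightarrow> bool \<Rightarrow> 'a::comm_ring_1" where
  "psign p q = (if p \<and> q then -1 else 1)"

definition bilinear_map :: "('k::field \<Rightarrow> 'v::ab_group_add \<Rightarrow> 'v) \<Rightarrow> ('k \<Rightarrow> 'w::ab_group_add \<Rightarrow> 'w)
    \<Rightarrow> ('v \<Rightarrow> 'v \<Rightarrow> 'w) \<Rightarrow> bool" where
  "bilinear_map s t f \<longleftrightarrow> (\<forall>x. Vector_Spaces.linear s t (f x)) \<and> (\<forall>y. Vector_Spaces.linear s t (\<lambda>x. f x y))"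

definition lie_superalgebra ::
  "('k::field \<Rightarrow> 'v::ab_group_add \<Rightarrow> 'v) \<Rightarrow> (bool \<Rightarrow> 'v set) \<Rightarrow> ('v \<Rightarrow> 'v \<Rightarrow> 'v) \<Rightarrow> bool" where
  "lie_superalgebra s V br \<longleftrightarrow>
     fin_dim_vs s \<and> z2_graded s V \<and> bilinear_map s s br
     \<and> (\<forall>p q x y. x \<in> V p \<longrightarrow> y \<in> V q \<longrightarrow> br x y \<in> V (p \<noteq> q))
     \<and> (\<forall>p q x y. x \<in> V p \<longrightarrow> y \<in> V q \<longrightarrow> br x y = - s (psign p q) (br y x))
     \<and> (\<forall>p q r x y z. x \<in> V p \<longrightarrow> y \<in> V q \<longrightarrow> z \<in> V r \<longrightarrow>
          s (psign p r) (br x (br y z)) + s (psign q p) (br y (br z x))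
            + s (psign r q) (br z (br x y)) = 0)"

definition abelian_bracket :: "('v \<Rightarrow> 'v \<Rightarrow> 'v::zero) \<Rightarrow> bool" where
  "abelian_bracket br \<longleftrightarrow> (\<forall>x y. br x y = 0)"

definition nd_ss_inv_form ::
  "('k::field \<Rightarrow> 'v::ab_group_add \<Rightarrow> 'v) \<Rightarrow> (bool \<Rightarrow> 'v set) \<Rightarrow> ('v \<Rightarrow> 'v \<Rightarrow> 'v)
     \<Rightarrow> ('v \<Rightarrow> 'v \<Rightarrow> 'k) \<Rightarrow> bool" where
  "nd_ss_inv_form s V br B \<longleftrightarrow>
     bilinear_map s (*) B
     \<and> (\<forall>x. (\<forall>y. B x y = 0) \<longrightarrow> x = 0)
     \<and> (\<forall>p q x y. x \<in> V p \<longrightarrow> y \<in> V q \<longrightarrow> B x y = psign p q * B y x)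
     \<and> (\<forall>x y z. B (br x y) z = B x (br y z))"

definition quadratic_structure ::
  "('k::field \<Rightarrow> 'v::ab_group_add \<Rightarrow> 'v) \<Rightarrow> (bool \<Rightarrow> 'v set) \<Rightarrow> ('v \<Rightarrow> 'v \<Rightarrow> 'v)
     \<Rightarrow> ('v \<Rightarrow> 'v \<Rightarrow> 'k) \<Rightarrow> bool" where
  "quadratic_structure s V br B \<longleftrightarrow> nd_ss_inv_form s V br B
     \<and> (\<forall>x y. x \<in> V False \<longrightarrow> y \<in> V True \<longrightarrow> B x y = 0)"

definition odd_quadratic_structure ::
  "('k::field \<Rightarrow> 'v::ab_group_add \<Rightarrow> 'v) \<Rightarrow> (bool \<Rightarrow> 'v set) \<Rightarrow> ('v \<Rightarrow> 'v \<Rightarrow> 'v)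
     \<Rightarrow> ('v \<Rightarrow> 'v \<Rightarrow> 'k) \<Rightarrow> bool" where
  "odd_quadratic_structure s V br B \<longleftrightarrow> nd_ss_inv_form s V br B
     \<and> (\<forall>x y. x \<in> V False \<longrightarrow> y \<in> V False \<longrightarrow> B x y = 0)
     \<and> (\<forall>x y. x \<in> V True \<longrightarrow> y \<in> V True \<longrightarrow> B x y = 0)"

end

theory Submission
  imports Defs
begin

lemma represent:
  fixes s :: "'k::field \<Rightarrow> 'v::ab_group_add \<Rightarrow> 'v" and B :: "'v \<Rightarrow> 'v \<Rightarrow> 'k"
  assumes vs: "vector_space s" and fin: "finite S" and sp: "module.span s S = UNIV"
    and lin2: "\<And>x. Vector_Spaces.linear s (*) (B x)"
    and lin1: "\<And>y. Vector_Spaces.linear s (*) (\<lambda>x. B x y)"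
    and nd: "\<And>x. (\<forall>y. B x y = 0) \<Longrightarrow> x = 0"
    and f: "Vector_Spaces.linear s (*) f"
  shows "\<exists>u. \<forall>z. B u z = f z"
proof -
  interpret vector_space s by fact
  obtain Bs where Bs: "independent Bs" "UNIV \<subseteq> span Bs"
    using basis_exists[of UNIV] by blast
  have finB: "finite Bs" using independent_span_bound[OF fin Bs(1)] sp by auto
  interpret fd: finite_dimensional_vector_space s Bs
    by unfold_locales (use Bs finB in auto)
  have h2: "module_hom s (*) (B x)" for x using lin2 linear_iff_module_hom by metis
  have h1: "module_hom s (*) (\<lambda>x. B x y)" for y using lin1 linear_iff_module_hom by metis
  have hf: "module_hom s (*) f" using f linear_iff_module_hom by metis
  define \<Phi> where "\<Phi> v = (\<Sum>b\<in>Bs. s (B v b) b)" for v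
  have Phi_lin: "Vector_Spaces.linear s s \<Phi>"
  proof -
    have "module_hom s s \<Phi>"
      unfolding module_hom_def module_hom_axioms_def
    proof (intro conjI allI)
      show "module s" by unfold_locales
      show "module s" by unfold_locales
      fix a c show "\<Phi> (a + c) = \<Phi> a + \<Phi> c"
        unfolding \<Phi>_def by (simp add: module_hom.add[OF h1] scale_left_distrib sum.distrib)
    next
      fix r a show "\<Phi> (s r a) = s r (\<Phi> a)"
        unfolding \<Phi>_def by (simp add: module_hom.scale[OF h1] scale_sum_right)
    qed
    then show ?thesis using linear_iff_module_hom by metis
  qed
  have coeff: "\<forall>b\<in>Bs. c b = 0" if "(\<Sum>b\<in>Bs. s (c b) b) = 0" for c
    using Bs(1) finB that independentD by blast
  have ext: "B u z = g z" if "\<forall>b\<in>Bs. B u b = g b" "module_hom s (*) g" for u g z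
  proof -
    have "z \<in> span Bs" using Bs by auto
    then obtain c where z: "z = (\<Sum>b\<in>Bs. s (c b) b)" using span_finite[OF finB] by auto
    show ?thesis unfolding z
      by (simp add: module_hom.sum[OF h2] module_hom.sum[OF that(2)]
            module_hom.scale[OF h2] module_hom.scale[OF that(2)] that(1))
  qed
  have "inj \<Phi>"
  proof (rule injI)
    fix a c assume "\<Phi> a = \<Phi> c"
    then have "(\<Sum>b\<in>Bs. s (B a b - B c b) b) = 0"
      unfolding \<Phi>_def by (simp add: scale_left_diff_distrib sum_subtractf)
    then have "\<forall>b\<in>Bs. B a b - B c b = 0" using coeff[of "\<lambda>b. B a b - B c b"] by blast
    then have "\<forall>b\<in>Bs. B (a - c) b = 0" by (simp add: module_hom.diff[OF h1])
    then have "\<forall>z. B (a - c) z = 0" using ext[of "a-c" "\<lambda>_. 0"] hf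
      by (simp add: module_hom_def module_hom_axioms_def) 
    then have "a - c = 0" using nd by blast
    then show "a = c" by simp
  qed
  then have "surj \<Phi>" using fd.linear_inj_imp_surj Phi_lin by blast
  then obtain u where u: "\<Phi> u = (\<Sum>b\<in>Bs. s (f b) b)" by (metis surjD)
  then have "(\<Sum>b\<in>Bs. s (B u b - f b) b) = 0"
    unfolding \<Phi>_def by (simp add: scale_left_diff_distrib sum_subtractf)
  then have "\<forall>b\<in>Bs. B u b - f b = 0" using coeff[of "\<lambda>b. B u b - f b"] by blast
  then have "\<forall>b\<in>Bs. B u b = f b" by simp
  then show ?thesis using ext hf by blast
qed

theorem mainTheorem5:
  fixes s :: "'k::field_char_0 \<Rightarrow> 'v::ab_group_add \<Rightarrow> 'v"
    and V :: "bool \<Rightarrow> 'v set"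
    and br :: "'v \<Rightarrow> 'v \<Rightarrow> 'v"
  assumes "alg_closed_field TYPE('k)"
    and "lie_superalgebra s V br"
    and "\<not> abelian_bracket br"
  shows "\<not> ((\<exists>B. quadratic_structure s V br B) \<and> (\<exists>B'. odd_quadratic_structure s V br B'))"
proof
  assume "(\<exists>B. quadratic_structure s V br B) \<and> (\<exists>B'. odd_quadratic_structure s V br B')"
  then obtain B B' where Q: "quadratic_structure s V br B" and O: "odd_quadratic_structure s V br B'"
    by blast
  from assms(2) have vs: "vector_space s" and fS: "\<exists>S. finite S \<and> module.span s S = UNIV"
    and gr: "z2_graded s V" and brl: "bilinear_map s s br"
    and brg: "\<And>p q x y. x \<in> V p \<Longrightarrow> y \<in> V q \<Longrightarrow> br x y \<in> V (p \<noteq> q)"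
    unfolding lie_superalgebra_def fin_dim_vs_def by blast+
  obtain S where S: "finite S" "module.span s S = UNIV" using fS by blast
  interpret vector_space s by fact
  have dec0: "\<exists>a b. a \<in> V False \<and> b \<in> V True \<and> v = a + b" for v
    using gr unfolding z2_graded_def by (metis fst_conv snd_conv)
  have dec: "\<exists>a b. a \<in> V p \<and> b \<in> V (\<not> p) \<and> v = a + b" for v p
    using dec0[of v] by (cases p) (auto simp: add.commute)
  have brl1: "module_hom s s (\<lambda>x. br x y)" for y
    using brl unfolding bilinear_map_def using linear_iff_module_hom by metis
  from Q have Bb: "bilinear_map s (*) B" and Bnd: "\<And>x. (\<forall>y. B x y = 0) \<Longrightarrow> x = 0"
    and Bss: "\<And>p q x y. x \<in> V p \<Longrightarrow> y \<in> V q \<Longrightarrow> B x y = psign p q * B y x"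
    and Binv: "\<And>x y z. B (br x y) z = B x (br y z)"
    and Bev: "\<And>x y. x \<in> V False \<Longrightarrow> y \<in> V True \<Longrightarrow> B x y = 0"
    unfolding quadratic_structure_def nd_ss_inv_form_def by blast+
  from O have Ob: "bilinear_map s (*) B'" and Ond: "\<And>x. (\<forall>y. B' x y = 0) \<Longrightarrow> x = 0"
    and Oss: "\<And>p q x y. x \<in> V p \<Longrightarrow> y \<in> V q \<Longrightarrow> B' x y = psign p q * B' y x"
    and Oinv: "\<And>x y z. B' (br x y) z = B' x (br y z)"
    and Oodd: "\<And>p x y. x \<in> V p \<Longrightarrow> y \<in> V p \<Longrightarrow> B' x y = 0"
    unfolding odd_quadratic_structure_def nd_ss_inv_form_def by (blast, blast, blast, blast, metis (full_types))
  have B1: "module_hom s (*) (\<lambda>x. B x y)" for y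
    using Bb unfolding bilinear_map_def using linear_iff_module_hom by metis
  have B2: "module_hom s (*) (B x)" for x
    using Bb unfolding bilinear_map_def using linear_iff_module_hom by metis
  have O1: "module_hom s (*) (\<lambda>x. B' x y)" for y
    using Ob unfolding bilinear_map_def using linear_iff_module_hom by metis
  have O2: "module_hom s (*) (B' x)" for x
    using Ob unfolding bilinear_map_def using linear_iff_module_hom by metis
  have E1: "B x y = 0" if "x \<in> V p" "y \<in> V q" "p \<noteq> q" for x y p q
  proof (cases p)
    case True
    then have "q = False" using that by auto
    then show ?thesis using Bss[OF that(1,2)] Bev[of y x] that True by simp
  next
    case False
    then show ?thesis using Bev that by auto
  qed
  have E2: "B w x = psign p p * B x w" if "x \<in> V p" for x w p
  proof -
    obtain a b where ab: "a \<in> V p" "b \<in> V (\<not> p)" "w = a + b" using dec by blast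
    have "B w x = B a x + B b x" using ab by (simp add: module_hom.add[OF B1])
    also have "\<dots> = psign p p * B x a" using Bss[OF ab(1) that] E1[OF ab(2) that] by simp
    also have "B x a = B x w" using ab E1[OF that ab(2)] by (simp add: module_hom.add[OF B2])
    finally show ?thesis .
  qed
  have Osym_h: "B' a b = B' b a" if "a \<in> V p" for a b p
  proof -
    obtain b1 b2 where bb: "b1 \<in> V p" "b2 \<in> V (\<not> p)" "b = b1 + b2" using dec by blast
    have "B' a b = B' a b2" using bb Oodd[OF that bb(1)] by (simp add: module_hom.add[OF O2])
    also have "\<dots> = B' b2 a" using Oss[OF that bb(2)] by (simp add: psign_def)
    also have "\<dots> = B' b a" using bb Oodd[OF bb(1) that] by (simp add: module_hom.add[OF O1])
    finally show ?thesis .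
  qed
  have Osym: "B' a b = B' b a" for a b
  proof -
    obtain a0 a1 where aa: "a0 \<in> V False" "a1 \<in> V True" "a = a0 + a1" using dec0 by blast
    show ?thesis using Osym_h[OF aa(1)] Osym_h[OF aa(2)] aa(3)
      by (simp add: module_hom.add[OF O1] module_hom.add[OF O2])
  qed
  have rep: "\<exists>u. \<forall>z. B u z = B' x z" for x
    by (rule represent[OF vs S]) (use Bb Bnd Ob in \<open>auto simp: bilinear_map_def\<close>)
  define D where "D x = (SOME u. \<forall>z. B u z = B' x z)" for x
  have DP: "B (D x) z = B' x z" for x z
    unfolding D_def using someI_ex[OF rep[of x]] by blast
  have uniq: "u = v" if "\<And>z. B u z = B v z" for u v
  proof -
    have "\<forall>z. B (u - v) z = 0" using that by (simp add: module_hom.diff[OF B1])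
    then have "u - v = 0" using Bnd by blast
    then show ?thesis by simp
  qed
  have Dscale: "D (s c w) = s c (D w)" for c w
    by (rule uniq) (simp add: DP module_hom.scale[OF B1] module_hom.scale[OF O1])
  have R1: "D (br x y) = br (D x) y" for x y
    by (rule uniq) (simp add: DP Oinv Binv)
  have R2: "D (br x y) = s (psign p p) (br x (D y))" if "x \<in> V p" for x y p
  proof (rule uniq)
    fix z
    have "B (D (br x y)) z = B' x (br y z)" by (simp add: DP Oinv)
    also have "\<dots> = B' y (br z x)" by (metis Osym Oinv)
    also have "\<dots> = B (br (D y) z) x" by (simp add: DP Binv)
    also have "\<dots> = psign p p * B x (br (D y) z)" using E2[OF that] by blast
    also have "\<dots> = B (s (psign p p) (br x (D y))) z"
      by (simp add: module_hom.scale[OF B1] Binv)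
    finally show "B (D (br x y)) z = B (s (psign p p) (br x (D y))) z" .
  qed
  have Dpar: "D x \<in> V (\<not> p)" if "x \<in> V p" for x p
  proof -
    obtain u1 u2 where uu: "u1 \<in> V p" "u2 \<in> V (\<not> p)" "D x = u1 + u2" using dec by blast
    have "\<forall>z. B u1 z = 0"
    proof
      fix z
      obtain z1 z2 where zz: "z1 \<in> V p" "z2 \<in> V (\<not> p)" "z = z1 + z2" using dec by blast
      have "B u1 z1 = B (D x) z1 - B u2 z1" using uu by (simp add: module_hom.add[OF B1])
      also have "\<dots> = 0" using DP Oodd[OF that zz(1)] E1[OF uu(2) zz(1)] by simp
      finally have "B u1 z1 = 0" .
      moreover have "B u1 z2 = 0" using E1[OF uu(1) zz(2)] by simp
      ultimately show "B u1 z = 0" using zz by (simp add: module_hom.add[OF B2])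
    qed
    then have "u1 = 0" using Bnd by blast
    then show ?thesis using uu by simp
  qed
  have Dinj: "w = 0" if "D w = 0" for w
  proof -
    have "\<forall>z. B' w z = 0" using DP[of w] that module_hom.zero[OF B1] by metis
    then show ?thesis using Ond by blast
  qed
  have hom0: "br x y = 0" if "x \<in> V p" for x y p
  proof -
    let ?w = "br (D x) (D y)"
    have "D (D (br x y)) = s (psign (\<not> p) (\<not> p)) ?w"
      using R1 R2[OF Dpar[OF that]] by simp
    moreover have "D (D (br x y)) = s (psign p p) ?w"
      using R2[OF that] Dscale R1 by simp
    ultimately have eq: "s (psign (\<not> p) (\<not> p)) ?w = s (psign p p) ?w" by metis
    have "?w + ?w = 0"
      using eq by (cases p) (simp_all add: psign_def scale_minus_left, metis add_right_imp_eq neg_eq_iff_add_eq_0, metis neg_eq_iff_add_eq_0)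
    then have "s 2 ?w = 0" by (metis one_add_one scale_left_distrib scale_one)
    then have "s (1/2) (s 2 ?w) = 0" by simp
    then have w0: "?w = 0" by (simp add: scale_scale)
    have "D (D (br x y)) = 0" using R2[OF that] Dscale R1 w0 by simp
    then show ?thesis using Dinj by blast
  qed
  have "br x y = 0" for x y
  proof -
    obtain a b where ab: "a \<in> V False" "b \<in> V True" "x = a + b" using dec0 by blast
    show ?thesis using hom0[OF ab(1)] hom0[OF ab(2)] ab(3) by (simp add: module_hom.add[OF brl1])
  qed
  then show False using assms(3) unfolding abelian_bracket_def by blast
qed

end
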